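(* Let $m\ge 2$ and let $e_1=(1,0)$, $e_2=(0,1)$ be the standard generating set of $\mathbb{Z}\times\mathbb{Z}_m$. Then the Cayley digraph $\mathrm{Cay}(\mathbb{Z}\times\mathbb{Z}_m;e_1,e_2)$ has a two-way infinite hamiltonian path, and it is unique up to translations.
   Context: The Cayley digraph $\mathrm{Cay}(G;a,b)$ has vertex set $G$ and an arc from $v$ to $v+s$ for all $v\in G$, $s\in\{a,b\}$. A two-way infinite hamiltonian path is a doubly-infinite sequence $\ldots,v_{-1},v_0,v_1,\ldots$ listing every vertex exactly once with an arc from $v_i$ to $v_{i+1}$ for all $i\in\mathbb{Z}$. A translate of a path by $g\in G$ is obtained by adding $g$ to every vertex. *)

theory Defs
  imports Main
begin

text \<open>The group Z x Z_m, represented by pairs (a, b) of integers with 0 <= b < m.\<close>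

definition zzm_verts :: "int \<Rightarrow> (int \<times> int) set" where
  "zzm_verts m = {(a, b). 0 \<le> b \<and> b < m}"

definition zzm_add :: "int \<Rightarrow> int \<times> int \<Rightarrow> int \<times> int \<Rightarrow> int \<times> int" where
  "zzm_add m v w = (fst v + fst w, (snd v + snd w) mod m)"

definition cay_arc :: "int \<Rightarrow> int \<times> int \<Rightarrow> int \<times> int \<Rightarrow> bool" where
  "cay_arc m v w \<longleftrightarrow> w = zzm_add m v (1, 0) \<or> w = zzm_add m v (0, 1)"

definition two_way_ham_path :: "int \<Rightarrow> (int \<Rightarrow> int \<times> int) \<Rightarrow> bool" where
  "two_way_ham_path m p \<longleftrightarrow>
     bij_betw p UNIV (zzm_verts m) \<and> (\<forall>i. cay_arc m (p i) (p (i + 1)))"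

end

theory Submission imports Defs begin

lemma int_all:
  fixes P :: "int \<Rightarrow> bool"
  assumes "P 0" and "\<And>i. P i \<longleftrightarrow> P (i + 1)"
  shows "P i"
proof (induction i rule: int_induct[where k=0])
  case base then show ?case using assms(1) .
next
  case (step1 i) then show ?case using assms(2) by blast
next
  case (step2 i) then show ?case using assms(2)[of "i - 1"] by simp
qed

lemma mod_shift: "((x::int) + c) mod m = (y + c) mod m \<longleftrightarrow> x mod m = y mod m"
proof
  assume "(x + c) mod m = (y + c) mod m"
  then have "(x + c + (- c)) mod m = (y + c + (- c)) mod m" by (rule mod_add_cong) simp
  then show "x mod m = y mod m" by simp
qed (rule mod_add_cong, simp_all)

definition E :: "int \<Rightarrow> (int \<Rightarrow> int \<times> int) \<Rightarrow> int \<Rightarrow> bool" where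
  "E m p i \<longleftrightarrow> p (i + 1) = (fst (p i) + 1, snd (p i))"

definition F :: "int \<Rightarrow> (int \<Rightarrow> int \<times> int) \<Rightarrow> int \<Rightarrow> int \<Rightarrow> bool" where
  "F m p a b \<longleftrightarrow> E m p (inv_into UNIV p (a, b mod m))"

context
  fixes m :: int and p :: "int \<Rightarrow> int \<times> int"
  assumes m2: "m \<ge> 2" and hp: "two_way_ham_path m p"
begin

lemma bij: "bij_betw p UNIV (zzm_verts m)" using hp unfolding two_way_ham_path_def by blast

lemma inV: "0 \<le> snd (p i) \<and> snd (p i) < m"
  using bij_betw_apply[OF bij, of i] unfolding zzm_verts_def by (auto split: prod.splits)

lemma injp: "p x = p y \<Longrightarrow> x = y"
  using bij_betw_imp_inj_on[OF bij] by (simp add: inj_eq)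

lemma surjp: "0 \<le> b \<Longrightarrow> b < m \<Longrightarrow> \<exists>i. p i = (a, b)"
  using bij_betw_imp_surj_on[OF bij] unfolding zzm_verts_def by (metis (mono_tags, lifting) UNIV_I case_prodI image_iff mem_Collect_eq)

lemma stepE: "E m p i \<Longrightarrow> p (i + 1) = (fst (p i) + 1, snd (p i))"
  by (simp add: E_def)

lemma stepN: "\<not> E m p i \<Longrightarrow> p (i + 1) = (fst (p i), (snd (p i) + 1) mod m)"
proof -
  assume "\<not> E m p i"
  moreover have "cay_arc m (p i) (p (i + 1))" using hp unfolding two_way_ham_path_def by blast
  ultimately show ?thesis using inV[of i]
    unfolding cay_arc_def zzm_add_def E_def by auto
qed

lemma fst_step: "fst (p (i + 1)) = fst (p i) + (if E m p i then 1 else 0)"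
  using stepE stepN by (cases "E m p i") auto

lemma diag: "(fst (p i) + snd (p i)) mod m = (fst (p 0) + snd (p 0) + i) mod m"
proof (induction i rule: int_all)
  case 1 then show ?case by simp
next
  case (2 i)
  show ?case
  proof (cases "E m p i")
    case True
    then have "(fst (p (i+1)) + snd (p (i+1))) mod m = (fst (p i) + snd (p i) + 1) mod m"
      using stepE[OF True] by (simp add: algebra_simps)
    then show ?thesis using 2 mod_shift[of "fst (p i) + snd (p i)" 1 m "fst (p 0) + snd (p 0) + i"]
      by (simp add: algebra_simps)
  next
    case False
    have "(fst (p (i+1)) + snd (p (i+1))) mod m = (fst (p i) + snd (p i) + 1) mod m"
      using stepN[OF False] by (simp add: mod_simps algebra_simps)
    then show ?thesis using 2 mod_shift[of "fst (p i) + snd (p i)" 1 m "fst (p 0) + snd (p 0) + i"]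
      by (simp add: algebra_simps)
  qed
qed

lemma pinv: "p (inv_into UNIV p (a, b mod m)) = (a, b mod m)"
proof -
  have "0 \<le> b mod m" "b mod m < m" using m2 by auto
  then obtain i where "p i = (a, b mod m)" using surjp by blast
  then show ?thesis by (metis UNIV_I f_inv_into_f image_eqI)
qed

lemma Finv: "F m p a b \<longleftrightarrow> F m p (a+1) (b-1)"
proof -
  define i where "i = inv_into UNIV p (a, b mod m)"
  define j where "j = inv_into UNIV p (a+1, (b-1) mod m)"
  have pi: "p i = (a, b mod m)" using pinv i_def by simp
  have pj: "p j = (a+1, (b-1) mod m)" using pinv j_def by simp
  have bm: "0 \<le> b mod m" "b mod m < m" "0 \<le> (b-1) mod m" "(b-1) mod m < m" using m2 by auto
  have ij: "i \<noteq> j" using pi pj by auto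
  have fw: "E m p j" if Ei: "E m p i"
  proof (rule ccontr)
    assume "\<not> E m p j"
    then have "p (j+1) = (a+1, ((b-1) mod m + 1) mod m)" using stepN[of j] pj by simp
    also have "((b-1) mod m + 1) mod m = b mod m" by (simp add: mod_simps)
    finally have "p (j+1) = p (i+1)" using stepE[OF Ei] pi by simp
    then show False using injp ij by fastforce
  qed
  have bw: "E m p i" if Ej: "E m p j"
  proof -
    obtain l where pl: "p l = (a+1, b mod m)" using surjp bm by blast
    have arc: "cay_arc m (p (l-1)) (p l)" using hp unfolding two_way_ham_path_def
      by (metis diff_add_cancel)
    have snd_l1: "0 \<le> snd (p (l-1))" "snd (p (l-1)) < m" using inV by auto
    show ?thesis
    proof (cases "p l = (fst (p (l-1)) + 1, snd (p (l-1)))")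
      case True
      then have "p (l-1) = p i" using pl pi by (metis add_right_cancel fst_conv snd_conv prod_eq_iff)
      then have "l - 1 = i" using injp by blast
      then show ?thesis unfolding E_def using pl pi True by (metis diff_add_cancel)
    next
      case False
      then have pl2: "p l = (fst (p (l-1)), (snd (p (l-1)) + 1) mod m)"
        using arc unfolding cay_arc_def zzm_add_def using snd_l1 by auto
      then have f1: "fst (p (l-1)) = a + 1" using pl by simp
      have "(snd (p (l-1)) + 1) mod m = b mod m" using pl pl2 by simp
      then have "(snd (p (l-1)) + 1 + (-1)) mod m = (b + (-1)) mod m" by (rule mod_add_cong) simp
      then have "snd (p (l-1)) mod m = (b - 1) mod m" by simp
      then have "snd (p (l-1)) = (b - 1) mod m" using snd_l1 by simp
      then have "p (l-1) = p j" using f1 pj by (simp add: prod_eq_iff)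
      then have "l - 1 = j" using injp by blast
      then have "p (j+1) = (a+1, b mod m)" using pl by (metis diff_add_cancel)
      moreover have "p (j+1) = (a+2, (b-1) mod m)" using stepE[OF Ej] pj by simp
      ultimately show ?thesis by simp
    qed
  qed
  show ?thesis unfolding F_def using fw bw i_def j_def by blast
qed

lemma Fshift: "F m p a b \<longleftrightarrow> F m p (a+n) (b-n)"
proof (induction n rule: int_all)
  case 1 then show ?case by simp
next
  case (2 n) then show ?case using Finv[of "a+n" "b-n"] by (simp add: algebra_simps)
qed

lemma Fmod: "F m p a (b mod m) \<longleftrightarrow> F m p a b"
  unfolding F_def by simp

lemma inv_p: "inv_into UNIV p (p i) = i"
  using bij_betw_imp_inj_on[OF bij] by (simp add: inv_into_f_f)

lemma Echar: "E m p i \<longleftrightarrow> F m p 0 (fst (p 0) + snd (p 0) + i)"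
proof -
  have "E m p i \<longleftrightarrow> F m p (fst (p i)) (snd (p i))"
    unfolding F_def using inV[of i] inv_p[of i] by simp
  also have "\<dots> \<longleftrightarrow> F m p 0 (fst (p i) + snd (p i))"
    using Fshift[of "fst (p i)" "snd (p i)" "- fst (p i)"] by (simp add: add.commute)
  also have "\<dots> \<longleftrightarrow> F m p 0 ((fst (p i) + snd (p i)) mod m)" using Fmod by simp
  also have "\<dots> \<longleftrightarrow> F m p 0 ((fst (p 0) + snd (p 0) + i) mod m)" using diag by simp
  also have "\<dots> \<longleftrightarrow> F m p 0 (fst (p 0) + snd (p 0) + i)" using Fmod by simp
  finally show ?thesis .
qed

lemma Emod: "E m p i \<longleftrightarrow> E m p (i mod m)"
proof -
  have "F m p 0 (fst (p 0) + snd (p 0) + i) \<longleftrightarrow> F m p 0 (fst (p 0) + snd (p 0) + i mod m)"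
    by (metis Fmod mod_add_right_eq)
  then show ?thesis using Echar by simp
qed

lemma Eper: "E m p (i + m) \<longleftrightarrow> E m p i"
  using Emod[of "i+m"] Emod[of i] by simp

lemma count: "fst (p (int n)) = fst (p 0) + int (card {l. 0 \<le> l \<and> l < int n \<and> E m p l})"
proof (induction n)
  case 0 
  have "{l. 0 \<le> l \<and> l < int 0 \<and> E m p l} = {}" by auto
  then show ?case by (metis add_0_right card.empty of_nat_0)
next
  case (Suc n)
  define S where "S = {l. 0 \<le> l \<and> l < int n \<and> E m p l}"
  have fin: "finite S" unfolding S_def by (rule finite_subset[of _ "{0..<int n}"]) auto
  have nS: "int n \<notin> S" unfolding S_def by simp
  have fs: "fst (p (int (Suc n))) = fst (p (int n)) + (if E m p (int n) then 1 else 0)"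
    using fst_step[of "int n"] by (simp add: add.commute)
  show ?case
  proof (cases "E m p (int n)")
    case True
    have "{l. 0 \<le> l \<and> l < int (Suc n) \<and> E m p l} = insert (int n) S"
      unfolding S_def using True by auto
    then show ?thesis using fin nS Suc fs True S_def by simp
  next
    case False
    have "{l. 0 \<le> l \<and> l < int (Suc n) \<and> E m p l} = S"
    proof (intro set_eqI iffI)
      fix x assume "x \<in> {l. 0 \<le> l \<and> l < int (Suc n) \<and> E m p l}"
      then have "0 \<le> x" "x < int n + 1" "E m p x" by auto
      moreover have "x \<noteq> int n" using False \<open>E m p x\<close> by auto
      ultimately show "x \<in> S" unfolding S_def by auto
    qed (auto simp: S_def)
    then show ?thesis using Suc fs False S_def by simp
  qed
qed

definition "cnt = card {l. 0 \<le> l \<and> l < m \<and> E m p l}"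

lemma delta: "fst (p (i + m)) - fst (p i) = int cnt"
proof (induction i rule: int_all)
  case 1 then show ?case using count[of "nat m"] m2 unfolding cnt_def by simp
next
  case (2 i)
  have "fst (p (i + 1 + m)) - fst (p (i+1)) = fst (p (i + m)) - fst (p i)"
    using fst_step[of "i+m"] fst_step[of i] Eper[of i] by (simp add: algebra_simps)
  then show ?case by simp
qed

lemma jm: "fst (p (j * m)) = fst (p 0) + j * int cnt"
proof (induction j rule: int_all)
  case 1 then show ?case by simp
next
  case (2 j) then show ?case using delta[of "j*m"] by (simp add: algebra_simps)
qed

lemma cnt1: "cnt = 1"
proof -
  have "0 \<le> (snd (p 0) - 1) mod m" "(snd (p 0) - 1) mod m < m" using m2 by auto
  then obtain i where pi: "p i = (fst (p 0) + 1, (snd (p 0) - 1) mod m)" using surjp by blast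
  have "(fst (p 0) + snd (p 0) + i) mod m = (fst (p 0) + 1 + (snd (p 0) - 1) mod m) mod m"
    using diag[of i] pi by simp
  also have "\<dots> = (fst (p 0) + snd (p 0) + 0) mod m" by (simp add: mod_simps)
  finally have "i mod m = 0 mod m" using mod_shift[of i "fst (p 0) + snd (p 0)" m 0] by (simp add: algebra_simps)
  then have "i mod m = 0" by simp
  then have "i = (i div m) * m" using div_mult_mod_eq[of i m] by simp
  then have "fst (p 0) + 1 = fst (p 0) + (i div m) * int cnt" using jm[of "i div m"] pi by simp
  then have "(i div m) * int cnt = 1" by simp
  then have "int cnt = 1 \<or> int cnt = -1" by (simp add: zmult_eq_1_iff)
  then show ?thesis by linarith
qed

lemma key: "\<exists>r. \<forall>i. E m p i \<longleftrightarrow> i mod m = r mod m"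
proof -
  obtain r where r: "{l. 0 \<le> l \<and> l < m \<and> E m p l} = {r}" using cnt1 unfolding cnt_def
    using card_1_singletonE by blast
  have "r \<in> {l. 0 \<le> l \<and> l < m \<and> E m p l}" using r by simp
  then have rm: "r mod m = r" by simp
  have "E m p i \<longleftrightarrow> i mod m = r mod m" for i
  proof -
    have "E m p i \<longleftrightarrow> E m p (i mod m)" by (rule Emod)
    also have "\<dots> \<longleftrightarrow> i mod m \<in> {l. 0 \<le> l \<and> l < m \<and> E m p l}" using m2 by simp
    also have "\<dots> \<longleftrightarrow> i mod m = r mod m" using r rm by simp
    finally show ?thesis .
  qed
  then show ?thesis by blast
qed

end

definition pp :: "int \<Rightarrow> int \<Rightarrow> int \<times> int" where
  "pp m i = (i div m, (i mod m - i div m) mod m)"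

lemma pp_ham: assumes m2: "m \<ge> 2" shows "two_way_ham_path m (pp m)"
proof -
  define f' where "f' = (\<lambda>(a::int, b::int). a * m + (b + a) mod m)"
  have bij: "bij_betw (pp m) UNIV (zzm_verts m)"
  proof (rule bij_betw_byWitness[where f'=f'])
    show "\<forall>i\<in>UNIV. f' (pp m i) = i"
    proof
      fix i
      have "(((i mod m - i div m) mod m) + i div m) mod m = i mod m" by (simp add: mod_simps)
      then show "f' (pp m i) = i" unfolding f'_def pp_def by simp
    qed
    show "\<forall>v\<in>zzm_verts m. pp m (f' v) = v"
    proof
      fix v assume "v \<in> zzm_verts m"
      then obtain a b where v: "v = (a, b)" "0 \<le> b" "b < m" unfolding zzm_verts_def by auto
      have d: "(a * m + (b + a) mod m) div m = a" using m2 by simp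
      have md: "(a * m + (b + a) mod m) mod m = (b + a) mod m" using m2 by simp
      have "((b + a) mod m - a) mod m = b mod m" by (simp add: mod_simps)
      then show "pp m (f' v) = v" unfolding f'_def pp_def using v d md by simp
    qed
    show "pp m ` UNIV \<subseteq> zzm_verts m" unfolding pp_def zzm_verts_def using m2 by auto
    show "f' ` zzm_verts m \<subseteq> UNIV" by simp
  qed
  have arc: "cay_arc m (pp m i) (pp m (i + 1))" for i
  proof -
    define a where "a = i div m"
    define t where "t = i mod m"
    have i: "i = a * m + t" unfolding a_def t_def by simp
    have t: "0 \<le> t" "t < m" unfolding t_def using m2 by auto
    show ?thesis
    proof (cases "t + 1 < m")
      case True
      have d: "(i + 1) div m = a" unfolding i using True t m2 
        by (simp add: add.assoc)
      have md: "(i + 1) mod m = t + 1" unfolding i using True t m2 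
        by (simp add: add.assoc)
      have "pp m (i + 1) = zzm_add m (pp m i) (0, 1)"
        unfolding pp_def zzm_add_def using d md by (simp add: a_def[symmetric] t_def[symmetric] mod_simps algebra_simps)
      then show ?thesis unfolding cay_arc_def by simp
    next
      case False
      then have tm: "t = m - 1" using t by simp
      have i1: "i + 1 = (a + 1) * m" unfolding i tm by (simp add: algebra_simps)
      have d: "(i + 1) div m = a + 1" unfolding i1 using m2 by simp
      have md: "(i + 1) mod m = 0" unfolding i1 by simp
      have "(t - a) mod m = (0 - (a + 1)) mod m" unfolding tm
        using mod_add_self2[of "-1 - a" m] by (simp add: algebra_simps)
      then have "pp m (i + 1) = zzm_add m (pp m i) (1, 0)"
        unfolding pp_def zzm_add_def using d md by (simp add: a_def[symmetric] t_def[symmetric])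
      then show ?thesis unfolding cay_arc_def by simp
    qed
  qed
  show ?thesis unfolding two_way_ham_path_def using bij arc by blast
qed

theorem mainTheorem15:
  fixes m :: int
  assumes "m \<ge> 2"
  shows "(\<exists>p. two_way_ham_path m p) \<and>
         (\<forall>p q. two_way_ham_path m p \<and> two_way_ham_path m q \<longrightarrow>
            (\<exists>g \<in> zzm_verts m. \<exists>k::int. \<forall>i. q i = zzm_add m (p (i + k)) g))"
proof (intro conjI allI impI)
  show "\<exists>p. two_way_ham_path m p" using pp_ham[OF assms] by blast
next
  fix p q assume "two_way_ham_path m p \<and> two_way_ham_path m q"
  then have hp: "two_way_ham_path m p" and hq: "two_way_ham_path m q" by auto
  obtain rp where rp: "\<And>i. E m p i \<longleftrightarrow> i mod m = rp mod m" using key[OF assms hp] by blast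
  obtain rq where rq: "\<And>i. E m q i \<longleftrightarrow> i mod m = rq mod m" using key[OF assms hq] by blast
  define k where "k = rp - rq"
  have Ek: "E m q i \<longleftrightarrow> E m p (i + k)" for i
    using rp[of "i+k"] rq[of i] mod_shift[of i k m rq] unfolding k_def by simp
  define g where "g = (fst (q 0) - fst (p k), (snd (q 0) - snd (p k)) mod m)"
  have gV: "g \<in> zzm_verts m" unfolding g_def zzm_verts_def using assms by simp
  have "q i = zzm_add m (p (i + k)) g" for i
  proof (induction i rule: int_all)
    case 1
    have "(snd (p k) + (snd (q 0) - snd (p k)) mod m) mod m = snd (q 0) mod m"
      by (simp add: mod_simps)
    also have "\<dots> = snd (q 0)" using inV[OF assms hq, of 0] by simp
    finally show ?case unfolding zzm_add_def g_def by (simp add: prod_eq_iff)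
  next
    case (2 i)
    have qi: "0 \<le> snd (q i)" "snd (q i) < m" using inV[OF assms hq] by auto
    have e: "i + 1 + k = (i + k) + 1" by simp
    show ?case
    proof (cases "E m q i")
      case True
      then have Ep: "E m p (i + k)" using Ek by simp
      show ?thesis using stepE[OF assms hq True] stepE[OF assms hp Ep] unfolding zzm_add_def e
        by (simp add: prod_eq_iff)
    next
      case False
      then have Ep: "\<not> E m p (i + k)" using Ek by simp
      define X where "X = snd (p (i + k)) + snd g"
      have "(snd (q i) + 1) mod m = (X + 1) mod m \<longleftrightarrow> snd (q i) mod m = X mod m"
        by (rule mod_shift)
      also have "\<dots> \<longleftrightarrow> snd (q i) = X mod m" using qi by simp
      finally have sn: "(snd (q i) + 1) mod m = ((snd (p (i + k)) + 1) mod m + snd g) mod m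
           \<longleftrightarrow> snd (q i) = (snd (p (i + k)) + snd g) mod m"
        unfolding X_def by (simp add: mod_simps algebra_simps)
      show ?thesis using stepN[OF assms hq False] stepN[OF assms hp Ep] sn unfolding zzm_add_def e
        by (simp add: prod_eq_iff)
    qed
  qed
  then show "\<exists>g \<in> zzm_verts m. \<exists>k::int. \<forall>i. q i = zzm_add m (p (i + k)) g" using gV by blast
qed

end
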